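(* Let $M$ be a three-holed sphere with $\pi_1(M)=\langle A,B,C: ABC=I\rangle$, where $A,B,C$ represent the three boundary components. For $\rho\in\operatorname{Hom}(\pi_1(M),\mathrm{SU}(2))$ write $a=\operatorname{tr}\rho(A)$, $b=\operatorname{tr}\rho(B)$, $c=\operatorname{tr}\rho(C)$. Then: (1) $\rho$ is $\mathrm{Spin}(2)$ if and only if $a^2+b^2+c^2-abc-4=0$; (2) $\rho$ is $\mathrm{Pin}(2)$ and not $\mathrm{Spin}(2)$ if and only if $a^2+b^2+c^2-abc-4\neq0$ and at least two of the three numbers $\operatorname{tr}\rho(A)$, $\operatorname{tr}\rho(B)$, $\operatorname{tr}\rho(AB)$ are zero.
   Context: Let $p:\mathrm{SU}(2)\to\mathrm{SO}(3)$ be the double cover. $\mathrm{Pin}(2)=p^{-1}(\mathrm{O}(2))$ for a subgroup $\mathrm{O}(2)\subset\mathrm{SO}(3)$, and $\mathrm{Spin}(2)$ is its identity component (a maximal torus of $\mathrm{SU}(2)$). For a subgroup $G\subset\mathrm{SU}(2)$, a representation $\rho$ is said to be $G$ if $\rho(\pi_1(M))$ is contained in some subgroup of $\mathrm{SU}(2)$ isomorphic to (i.e. a conjugate copy of) $G$, and not $G$ if it is contained in no such copy. *)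

theory Defs
  imports "HOL-Analysis.Analysis"
begin

type_synonym cmat = "complex^2^2"

definition mat2 :: "complex \<Rightarrow> complex \<Rightarrow> complex \<Rightarrow> complex \<Rightarrow> cmat" where
  "mat2 p q r s = (\<chi> i j. if i = 1 then (if j = 1 then p else q) else (if j = 1 then r else s))"

text \<open>Conjugate transpose; for elements of SU(2) this is the group inverse.\<close>
definition adj :: "cmat \<Rightarrow> cmat" where
  "adj U = (\<chi> i j. cnj (U $ j $ i))"

definition SU2 :: "cmat set" where
  "SU2 = {U. U ** adj U = mat 1 \<and> det U = 1}"

definition Spin2_std :: "cmat set" where
  "Spin2_std = {mat2 z 0 0 (cnj z) | z. cmod z = 1}"

text \<open>Standard Pin(2) = p^{-1}(O(2)) = Spin(2) union j Spin(2), j = [[0,1],[-1,0]].\<close>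
definition Pin2_std :: "cmat set" where
  "Pin2_std = Spin2_std \<union> {mat2 0 z (- cnj z) 0 | z. cmod z = 1}"

definition conj_copy :: "cmat \<Rightarrow> cmat set \<Rightarrow> cmat set" where
  "conj_copy g H = (\<lambda>h. g ** h ** adj g) ` H"

text \<open>Image of the representation of the free group on A, B (pi_1 of the
  three-holed sphere, C = (AB)^{-1}) determined by rho(A) = X, rho(B) = Y:
  the set of all words in X, Y and their inverses.\<close>
inductive_set rep_image :: "cmat \<Rightarrow> cmat \<Rightarrow> cmat set" for X Y where
  one: "mat 1 \<in> rep_image X Y"
| mX: "Z \<in> rep_image X Y \<Longrightarrow> Z ** X \<in> rep_image X Y"
| mY: "Z \<in> rep_image X Y \<Longrightarrow> Z ** Y \<in> rep_image X Y"
| mXi: "Z \<in> rep_image X Y \<Longrightarrow> Z ** adj X \<in> rep_image X Y"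
| mYi: "Z \<in> rep_image X Y \<Longrightarrow> Z ** adj Y \<in> rep_image X Y"

definition rep_is :: "cmat set \<Rightarrow> cmat \<Rightarrow> cmat \<Rightarrow> bool" where
  "rep_is G X Y \<longleftrightarrow> (\<exists>g\<in>SU2. rep_image X Y \<subseteq> conj_copy g G)"

end

theory Submission
  imports Defs
begin


lemma mat2_nth: "mat2 p q r s $ 1 $ 1 = p" "mat2 p q r s $ 1 $ 2 = q"
  "mat2 p q r s $ 2 $ 1 = r" "mat2 p q r s $ 2 $ 2 = s"
  by (simp_all add: mat2_def)

lemma cmat_eq_iff: "(A::cmat) = B \<longleftrightarrow> A$1$1 = B$1$1 \<and> A$1$2 = B$1$2 \<and> A$2$1 = B$2$1 \<and> A$2$2 = B$2$2"
  by (auto simp: vec_eq_iff forall_2)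

lemma cmat_as_mat2: "(A::cmat) = mat2 (A$1$1) (A$1$2) (A$2$1) (A$2$2)"
  by (simp add: cmat_eq_iff mat2_nth)

lemma mat2_eq_iff: "mat2 p q r s = mat2 p' q' r' s' \<longleftrightarrow> p = p' \<and> q = q' \<and> r = r' \<and> s = s'"
  by (simp add: cmat_eq_iff mat2_nth)

lemma mat2_mult: "mat2 a b c d ** mat2 e f g h = mat2 (a*e+b*g) (a*f+b*h) (c*e+d*g) (c*f+d*h)"
  by (simp add: cmat_eq_iff mat2_nth matrix_matrix_mult_def sum_2)

lemma adj_mat2: "adj (mat2 p q r s) = mat2 (cnj p) (cnj r) (cnj q) (cnj s)"
  by (simp add: cmat_eq_iff mat2_nth adj_def)

lemma trace_mat2: "trace (mat2 p q r s) = p + s"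
  by (simp add: trace_def sum_2 mat2_nth)

lemma det_mat2: "det (mat2 p q r s) = p * s - q * r"
  by (simp add: det_2 mat2_nth)

lemma mat1_mat2: "(mat 1 :: cmat) = mat2 1 0 0 1"
  by (simp add: cmat_eq_iff mat2_nth mat_def)

lemma adj_adj: "adj (adj A) = A"
  by (simp add: adj_def vec_eq_iff)

lemma adj_mult: "adj (A ** B) = adj B ** adj (A::cmat)"
  by (simp add: cmat_eq_iff adj_def matrix_matrix_mult_def sum_2 mult.commute)

definition Q :: "real \<Rightarrow> real \<Rightarrow> real \<Rightarrow> real \<Rightarrow> cmat" where
  "Q x0 x1 x2 x3 = mat2 (Complex x0 x1) (Complex x2 x3) (Complex (-x2) x3) (Complex x0 (-x1))"

lemma Q_SU2: "Q x0 x1 x2 x3 \<in> SU2 \<longleftrightarrow> x0^2+x1^2+x2^2+x3^2 = 1"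
proof -
  have "Q x0 x1 x2 x3 ** adj (Q x0 x1 x2 x3) = mat2 (of_real (x0^2+x1^2+x2^2+x3^2)) 0 0 (of_real (x0^2+x1^2+x2^2+x3^2))"
    by (simp add: Q_def adj_mat2 mat2_mult mat2_eq_iff complex_eq_iff power2_eq_square algebra_simps)
  moreover have "det (Q x0 x1 x2 x3) = of_real (x0^2+x1^2+x2^2+x3^2)"
    by (simp add: Q_def det_mat2 complex_eq_iff power2_eq_square algebra_simps)
  ultimately show ?thesis
    by (auto simp: SU2_def mat1_mat2 mat2_eq_iff complex_eq_iff)
qed

lemma SU2_Q_form:
  assumes "U \<in> SU2"
  shows "U = Q (Re (U$1$1)) (Im (U$1$1)) (Re (U$1$2)) (Im (U$1$2))"
    and "(Re (U$1$1))^2 + (Im (U$1$1))^2 + (Re (U$1$2))^2 + (Im (U$1$2))^2 = 1"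
proof -
  define a b c d where "a = U$1$1" "b = U$1$2" "c = U$2$1" "d = U$2$2"
  have U: "U = mat2 a b c d" using cmat_as_mat2[of U] a_b_c_d_def by simp
  have h1: "U ** adj U = mat 1" and h2: "det U = 1" using assms by (auto simp: SU2_def)
  have dt: "a*d - b*c = 1" using h2 U by (simp add: det_mat2)
  define K where "K = mat2 d (-b) (-c) a"
  have "K ** U = mat 1" using dt by (simp add: K_def U mat2_mult mat1_mat2 mat2_eq_iff algebra_simps)
  hence "adj U = K" using h1
    by (metis matrix_mul_assoc matrix_mul_lid matrix_mul_rid)
  hence e: "cnj a = d" "cnj c = -b" "cnj b = -c" "cnj d = a"
    by (auto simp: U K_def adj_mat2 mat2_eq_iff)
  show "U = Q (Re (U$1$1)) (Im (U$1$1)) (Re (U$1$2)) (Im (U$1$2))"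
    using e unfolding U Q_def a_b_c_d_def[symmetric]
    by (simp add: mat2_nth mat2_eq_iff complex_eq_iff)
  then show "(Re (U$1$1))^2 + (Im (U$1$1))^2 + (Re (U$1$2))^2 + (Im (U$1$2))^2 = 1"
    using assms Q_SU2 by metis
qed

definition co0 :: "cmat \<Rightarrow> real" where "co0 U = Re (U$1$1)"
definition co1 :: "cmat \<Rightarrow> real" where "co1 U = Im (U$1$1)"
definition co2 :: "cmat \<Rightarrow> real" where "co2 U = Re (U$1$2)"
definition co3 :: "cmat \<Rightarrow> real" where "co3 U = Im (U$1$2)"

lemma SU2_co: assumes "U \<in> SU2"
  shows "U = Q (co0 U) (co1 U) (co2 U) (co3 U)" "(co0 U)^2 + (co1 U)^2 + (co2 U)^2 + (co3 U)^2 = 1"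
  using SU2_Q_form[OF assms] by (simp_all add: co0_def co1_def co2_def co3_def)

lemma co_Q: "co0 (Q x0 x1 x2 x3) = x0" "co1 (Q x0 x1 x2 x3) = x1" "co2 (Q x0 x1 x2 x3) = x2" "co3 (Q x0 x1 x2 x3) = x3"
  by (simp_all add: co0_def co1_def co2_def co3_def Q_def mat2_nth)

lemma adj_Q: "adj (Q x0 x1 x2 x3) = Q x0 (-x1) (-x2) (-x3)"
  by (simp add: Q_def adj_mat2 mat2_eq_iff complex_eq_iff)

lemma SU2_adj: assumes u: "U \<in> SU2" shows "adj U \<in> SU2"
proof -
  have "adj U = Q (co0 U) (-co1 U) (-co2 U) (-co3 U)" using SU2_co(1)[OF u] adj_Q by metis
  then show ?thesis using Q_SU2 SU2_co(2)[OF u] by simp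
qed

lemma SU2_adj_mult: "U \<in> SU2 \<Longrightarrow> adj U ** U = mat 1" "U \<in> SU2 \<Longrightarrow> U ** adj U = mat 1"
  subgoal using SU2_adj[of U] unfolding SU2_def by (simp add: adj_adj)
  subgoal unfolding SU2_def by simp
  done

lemma SU2_mult: "U \<in> SU2 \<Longrightarrow> V \<in> SU2 \<Longrightarrow> U ** V \<in> SU2"
proof -
  assume u: "U \<in> SU2" and v: "V \<in> SU2"
  have "(U ** V) ** adj (U ** V) = U ** (V ** adj V) ** adj U"
    by (simp add: adj_mult matrix_mul_assoc)
  also have "\<dots> = mat 1" using u v SU2_adj_mult by simp
  finally show ?thesis using u v by (simp add: SU2_def det_mul)
qed

lemma trace_Q: "trace (Q x0 x1 x2 x3) = of_real (2*x0)"
  by (simp add: Q_def trace_mat2 complex_eq_iff)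

lemma trace_QD: "trace (Q y0 y1 y2 y3 ** Q 0 1 0 0) = of_real (-2*y1)"
  by (simp add: Q_def trace_mat2 mat2_mult complex_eq_iff)

lemma trace_QQ: "trace (Q z0 z1 z2 z3 ** Q w0 w1 w2 w3) = of_real (2*(z0*w0 - z1*w1 - z2*w2 - z3*w3))"
  by (simp add: Q_def trace_mat2 mat2_mult complex_eq_iff algebra_simps)

lemma Spin_iff: "U \<in> SU2 \<Longrightarrow> U \<in> Spin2_std \<longleftrightarrow> co2 U = 0 \<and> co3 U = 0"
proof -
  assume u: "U \<in> SU2"
  note f = SU2_co[OF u]
  show ?thesis
  proof
    assume "U \<in> Spin2_std"
    then obtain z where "U = mat2 z 0 0 (cnj z)" by (auto simp: Spin2_std_def)
    then show "co2 U = 0 \<and> co3 U = 0" by (simp add: co2_def co3_def mat2_nth)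
  next
    assume h: "co2 U = 0 \<and> co3 U = 0"
    let ?z = "Complex (co0 U) (co1 U)"
    have "Q (co0 U) (co1 U) 0 0 = mat2 ?z 0 0 (cnj ?z)" by (simp add: Q_def mat2_eq_iff complex_eq_iff)
    hence "U = mat2 ?z 0 0 (cnj ?z)" using f(1) h by metis
    moreover have "cmod ?z = 1" using f(2) h by (simp add: cmod_def)
    ultimately show "U \<in> Spin2_std" by (auto simp: Spin2_std_def)
  qed
qed

definition Jset :: "cmat set" where "Jset = {mat2 0 z (- cnj z) 0 | z. cmod z = 1}"

lemma Pin_Jset: "Pin2_std = Spin2_std \<union> Jset" by (simp add: Pin2_std_def Jset_def)

lemma J_iff: "U \<in> SU2 \<Longrightarrow> U \<in> Jset \<longleftrightarrow> co0 U = 0 \<and> co1 U = 0"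
proof -
  assume u: "U \<in> SU2"
  note f = SU2_co[OF u]
  show ?thesis
  proof
    assume "U \<in> Jset"
    then obtain z where "U = mat2 0 z (- cnj z) 0" by (auto simp: Jset_def)
    then show "co0 U = 0 \<and> co1 U = 0" by (simp add: co0_def co1_def mat2_nth)
  next
    assume h: "co0 U = 0 \<and> co1 U = 0"
    let ?z = "Complex (co2 U) (co3 U)"
    have "Q 0 0 (co2 U) (co3 U) = mat2 0 ?z (- cnj ?z) 0" by (simp add: Q_def mat2_eq_iff complex_eq_iff)
    hence "U = mat2 0 ?z (- cnj ?z) 0" using f(1) h by metis
    moreover have "cmod ?z = 1" using f(2) h by (simp add: cmod_def)
    ultimately show "U \<in> Jset" by (auto simp: Jset_def)
  qed
qed

lemma SU2_obtain: assumes "U \<in> SU2" obtains x0 x1 x2 x3 where "U = Q x0 x1 x2 x3" "x0^2+x1^2+x2^2+x3^2 = 1"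
  using SU2_co[OF assms] by blast

lemma trace_SU2: "U \<in> SU2 \<Longrightarrow> trace U = of_real (2 * co0 U)"
  by (erule SU2_obtain) (simp add: trace_Q co_Q)

lemma trace_SU2_D: "U \<in> SU2 \<Longrightarrow> trace (U ** Q 0 1 0 0) = of_real (-2 * co1 U)"
  by (erule SU2_obtain) (simp add: trace_QD co_Q)

lemma trace_SU2_SU2: "U \<in> SU2 \<Longrightarrow> V \<in> SU2 \<Longrightarrow>
   trace (U ** V) = of_real (2*(co0 U * co0 V - co1 U * co1 V - co2 U * co2 V - co3 U * co3 V))"
  by (erule SU2_obtain, erule SU2_obtain) (simp add: trace_QQ co_Q)

lemma D_SU2: "Q 0 1 0 0 \<in> SU2" by (simp add: Q_SU2)

lemma conj_coords:
  assumes g: "g \<in> SU2" and Z: "Z \<in> SU2"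
  defines "W \<equiv> g ** Q 0 1 0 0 ** adj g"
  shows "adj g ** Z ** g \<in> SU2" "W \<in> SU2" "co0 W = 0"
    "co0 (adj g ** Z ** g) = co0 Z"
    "co1 (adj g ** Z ** g) = co1 Z * co1 W + co2 Z * co2 W + co3 Z * co3 W"
proof -
  let ?D = "Q 0 1 0 0"
  let ?Z = "adj g ** Z ** g"
  have gi: "adj g ** g = mat 1" "g ** adj g = mat 1" using SU2_adj_mult g by auto
  show zs: "?Z \<in> SU2" using g Z by (simp add: SU2_mult SU2_adj)
  show ws: "W \<in> SU2" unfolding W_def using g D_SU2 by (simp add: SU2_mult SU2_adj)
  have "trace W = trace (?D ** adj g ** g)" unfolding W_def
    by (metis matrix_mul_assoc trace_mul_sym)
  also have "\<dots> = trace ?D" by (simp add: gi matrix_mul_assoc[symmetric])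
  finally have "trace W = 0" by (simp add: trace_Q)
  then show w0: "co0 W = 0" using trace_SU2[OF ws] by simp
  have "trace ?Z = trace (g ** (adj g ** Z))" by (metis trace_mul_sym)
  also have "\<dots> = trace Z" by (simp add: matrix_mul_assoc gi)
  finally show "co0 ?Z = co0 Z" using trace_SU2[OF zs] trace_SU2[OF Z] by simp
  have "trace (?Z ** ?D) = trace (adj g ** (Z ** g ** ?D))" by (simp add: matrix_mul_assoc)
  also have "\<dots> = trace (Z ** g ** ?D ** adj g)" by (metis trace_mul_sym)
  also have "\<dots> = trace (Z ** W)" unfolding W_def by (simp add: matrix_mul_assoc)
  finally have "trace (?Z ** ?D) = trace (Z ** W)" .
  then have "-2 * co1 ?Z = 2*(co0 Z * co0 W - co1 Z * co1 W - co2 Z * co2 W - co3 Z * co3 W)"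
    using trace_SU2_D[OF zs] trace_SU2_SU2[OF Z ws] of_real_eq_iff by metis
  then show "co1 ?Z = co1 Z * co1 W + co2 Z * co2 W + co3 Z * co3 W"
    using w0 by simp
qed

lemma Spin_conj_iff:
  assumes g: "g \<in> SU2" and Z: "Z \<in> SU2"
  defines "W \<equiv> g ** Q 0 1 0 0 ** adj g"
  shows "adj g ** Z ** g \<in> Spin2_std \<longleftrightarrow>
    (co1 Z * co1 W + co2 Z * co2 W + co3 Z * co3 W)^2 = (co1 Z)^2 + (co2 Z)^2 + (co3 Z)^2"
proof -
  let ?Z = "adj g ** Z ** g"
  note cc = conj_coords[OF g Z, folded W_def]
  have s1: "(co0 ?Z)^2 + (co1 ?Z)^2 + (co2 ?Z)^2 + (co3 ?Z)^2 = 1" using SU2_co(2)[OF cc(1)] .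
  have s2: "(co0 Z)^2 + (co1 Z)^2 + (co2 Z)^2 + (co3 Z)^2 = 1" using SU2_co(2)[OF Z] .
  have "?Z \<in> Spin2_std \<longleftrightarrow> co2 ?Z = 0 \<and> co3 ?Z = 0" using Spin_iff[OF cc(1)] .
  also have "\<dots> \<longleftrightarrow> (co2 ?Z)^2 + (co3 ?Z)^2 = 0" by (simp add: sum_power2_eq_zero_iff)
  also have "\<dots> \<longleftrightarrow> (co1 ?Z)^2 = (co1 Z)^2 + (co2 Z)^2 + (co3 Z)^2" using s1[unfolded cc(4)] s2 by linarith
  finally show ?thesis using cc(5) by simp
qed

lemma J_conj_iff:
  assumes g: "g \<in> SU2" and Z: "Z \<in> SU2"
  defines "W \<equiv> g ** Q 0 1 0 0 ** adj g"
  shows "adj g ** Z ** g \<in> Jset \<longleftrightarrow>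
    co0 Z = 0 \<and> co1 Z * co1 W + co2 Z * co2 W + co3 Z * co3 W = 0"
  using J_iff[OF conj_coords(1)[OF g Z]] conj_coords(4,5)[OF g Z] unfolding W_def by simp

definition grp :: "cmat set \<Rightarrow> bool" where
  "grp G \<longleftrightarrow> mat 1 \<in> G \<and> (\<forall>A\<in>G. \<forall>B\<in>G. A ** B \<in> G) \<and> (\<forall>A\<in>G. adj A \<in> G)"

lemma conj_copy_iff: "g \<in> SU2 \<Longrightarrow> M \<in> conj_copy g G \<longleftrightarrow> adj g ** M ** g \<in> G"
proof -
  assume g: "g \<in> SU2"
  have gi: "adj g ** g = mat 1" "g ** adj g = mat 1" using SU2_adj_mult g by auto
  show ?thesis
  proof
    assume "M \<in> conj_copy g G"
    then obtain h where "h \<in> G" "M = g ** h ** adj g" by (auto simp: conj_copy_def)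
    moreover have "adj g ** (g ** h ** adj g) ** g = h"
      by (simp add: matrix_mul_assoc gi) (simp add: matrix_mul_assoc[symmetric] gi)
    ultimately show "adj g ** M ** g \<in> G" by simp
  next
    assume "adj g ** M ** g \<in> G"
    moreover have "M = g ** (adj g ** M ** g) ** adj g"
      by (simp add: matrix_mul_assoc gi) (simp add: matrix_mul_assoc[symmetric] gi)
    ultimately show "M \<in> conj_copy g G" unfolding conj_copy_def by blast
  qed
qed

lemma rep_image_sub_iff:
  assumes g: "g \<in> SU2" and G: "grp G"
  shows "rep_image X Y \<subseteq> conj_copy g G \<longleftrightarrow> adj g ** X ** g \<in> G \<and> adj g ** Y ** g \<in> G"
proof -
  have gi: "adj g ** g = mat 1" "g ** adj g = mat 1" using SU2_adj_mult g by auto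
  have split: "adj g ** (Z ** M) ** g = (adj g ** Z ** g) ** (adj g ** M ** g)" for Z M
  proof -
    have "(adj g ** Z ** g) ** (adj g ** M ** g) = adj g ** Z ** (g ** adj g) ** M ** g"
      by (simp add: matrix_mul_assoc)
    then show ?thesis by (simp add: gi matrix_mul_assoc)
  qed
  have adjc: "adj g ** adj M ** g = adj (adj g ** M ** g)" for M
    by (simp add: adj_mult adj_adj matrix_mul_assoc)
  show ?thesis
  proof
    assume "rep_image X Y \<subseteq> conj_copy g G"
    moreover have "X \<in> rep_image X Y" "Y \<in> rep_image X Y"
      using rep_image.mX[OF rep_image.one] rep_image.mY[OF rep_image.one] by auto
    ultimately show "adj g ** X ** g \<in> G \<and> adj g ** Y ** g \<in> G"
      using conj_copy_iff[OF g] by blast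
  next
    assume h: "adj g ** X ** g \<in> G \<and> adj g ** Y ** g \<in> G"
    have "adj g ** Z ** g \<in> G" if "Z \<in> rep_image X Y" for Z
      using that
    proof induct
      case one then show ?case using G gi by (simp add: grp_def)
    next
      case (mX Z) then show ?case using G h split by (simp add: grp_def)
    next
      case (mY Z) then show ?case using G h split by (simp add: grp_def)
    next
      case (mXi Z) then show ?case using G h split adjc by (simp add: grp_def)
    next
      case (mYi Z) then show ?case using G h split adjc by (simp add: grp_def)
    qed
    then show "rep_image X Y \<subseteq> conj_copy g G" using conj_copy_iff[OF g] by blast
  qed
qed

lemma grp_Spin: "grp Spin2_std"
  unfolding grp_def Spin2_std_def
  apply (intro conjI)
  subgoal by (auto simp: mat1_mat2 intro!: exI[of _ 1])
  subgoal
    apply (clarsimp simp: mat2_mult)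
    subgoal for z w by (rule exI[of _ "z*w"]) (simp add: norm_mult)
    done
  subgoal
    apply (clarsimp simp: adj_mat2)
    subgoal for z by (rule exI[of _ "cnj z"]) simp
    done
  done

lemma grp_Pin: "grp Pin2_std"
  unfolding grp_def Pin2_std_def Spin2_std_def
  apply (intro conjI)
  subgoal by (auto simp: mat1_mat2 intro!: exI[of _ 1])
  subgoal
    apply (auto simp: mat2_mult norm_mult mat2_eq_iff)
    done
  subgoal
    apply (auto simp: adj_mat2 mat2_eq_iff)
    done
  done

lemma exists_g:
  assumes w: "w1^2 + w2^2 + w3^2 = 1"
  shows "\<exists>g\<in>SU2. g ** Q 0 1 0 0 ** adj g = Q 0 w1 w2 w3"
proof (cases "w1 = 1")
  case True
  then have "w2 = 0" "w3 = 0" using w by (auto simp: sum_power2_eq_zero_iff)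
  moreover have a1: "adj (mat 1) = (mat 1::cmat)" by (simp add: adj_def mat_def vec_eq_iff)
  moreover have "mat 1 \<in> SU2" using a1 by (simp add: SU2_def)
  ultimately show ?thesis using True by (intro bexI[of _ "mat 1"]) auto
next
  case False
  have w1: "w1 < 1"
  proof (rule ccontr)
    assume "\<not> w1 < 1"
    then have "w1 > 1" using False by simp
    then have "w1^2 > 1" by (simp add: one_less_power)
    then show False using w by (smt (verit) zero_le_power2)
  qed
  define n where "n = sqrt (2 - 2*w1)"
  have n: "n > 0" using w1 by (simp add: n_def)
  have n2: "n^2 = 2 - 2*w1" using w1 by (simp add: n_def)
  define g where "g = Q (w2/n) (w3/n) 0 ((1-w1)/n)"
  have gs: "g \<in> SU2" unfolding g_def Q_SU2
    using n n2 w by (simp add: power_divide field_simps) (simp add: power2_eq_square algebra_simps)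
  let ?W = "Q 0 w1 w2 w3"
  have key: "n*(n*(w1*w1)) + (n*(n*(w2*w2)) + n*(n*(w3*w3))) = n*n"
  proof -
    have "n*n*(w1^2+w2^2+w3^2) = n*n" using w by simp
    then show ?thesis by (simp add: power2_eq_square algebra_simps)
  qed
  have "?W ** g = g ** Q 0 1 0 0"
    unfolding g_def Q_def using n n2 w key
    by (simp add: mat2_mult mat2_eq_iff complex_eq_iff field_simps)
  then have "g ** Q 0 1 0 0 ** adj g = ?W ** (g ** adj g)" by (simp add: matrix_mul_assoc)
  also have "\<dots> = ?W" using SU2_adj_mult(2)[OF gs] by simp
  finally show ?thesis using gs by blast
qed



lemma sq3_zero: "a^2 + b^2 + c^2 = (0::real) \<Longrightarrow> a = 0 \<and> b = 0 \<and> c = 0"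
proof -
  assume h: "a^2 + b^2 + c^2 = 0"
  have "a^2 \<ge> 0" "b^2 \<ge> 0" "c^2 \<ge> 0" by simp_all
  then have "a^2 = 0" "b^2 = 0" "c^2 = 0" using h by linarith+
  then show ?thesis by simp
qed

lemma normalize3:
  fixes v1 v2 v3 :: real
  assumes S: "v1^2 + v2^2 + v3^2 \<noteq> 0"
  shows "\<exists>w1 w2 w3. w1^2+w2^2+w3^2 = 1 \<and> (\<forall>z1 z2 z3.
     (z1*w1+z2*w2+z3*w3)^2 = (z1* v1+z2* v2+z3* v3)^2 / (v1^2 + v2^2 + v3^2) \<and>
     (z1*w1+z2*w2+z3*w3 = 0 \<longleftrightarrow> z1* v1+z2* v2+z3* v3 = 0))"
proof -
  define S where "S = v1^2 + v2^2 + v3^2"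
  have "S \<ge> 0" unfolding S_def by simp
  then have Sp: "S > 0" using S unfolding S_def by linarith
  define n where "n = sqrt S"
  have n: "n > 0" "n^2 = S" using Sp by (simp_all add: n_def)
  show ?thesis
  proof (intro exI conjI allI)
    have "(v1/n)^2 + (v2/n)^2 + (v3/n)^2 = (v1^2+v2^2+v3^2)/n^2" by (simp add: power_divide add_divide_distrib)
    then show "(v1/n)^2 + (v2/n)^2 + (v3/n)^2 = 1" using n Sp by (simp add: S_def)
    fix z1 z2 z3
    show "(z1*(v1/n)+z2*(v2/n)+z3*(v3/n))^2 = (z1* v1+z2* v2+z3* v3)^2 / (v1^2+v2^2+v3^2)"
    proof -
      have "z1*(v1/n)+z2*(v2/n)+z3*(v3/n) = (z1* v1+z2* v2+z3* v3)/n" by (simp add: add_divide_distrib)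
      then show ?thesis using n by (simp add: power_divide S_def)
    qed
    show "z1*(v1/n)+z2*(v2/n)+z3*(v3/n) = 0 \<longleftrightarrow> z1* v1+z2* v2+z3* v3 = 0"
      using n by (simp add: field_simps)
  qed
qed

lemma par3:
  fixes w1 w2 w3 x1 x2 x3 :: real
  assumes w: "w1^2+w2^2+w3^2 = 1" and p: "(x1*w1+x2*w2+x3*w3)^2 = x1^2+x2^2+x3^2"
  shows "x1 = (x1*w1+x2*w2+x3*w3) * w1 \<and> x2 = (x1*w1+x2*w2+x3*w3) * w2 \<and> x3 = (x1*w1+x2*w2+x3*w3) * w3"
proof -
  define s where "s = x1*w1+x2*w2+x3*w3"
  have "(x1 - s*w1)^2 + (x2 - s*w2)^2 + (x3 - s*w3)^2 = (x1^2+x2^2+x3^2) - 2 * s * s + s^2*(w1^2+w2^2+w3^2)"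
    by (simp add: s_def power2_eq_square algebra_simps)
  also have "\<dots> = 0" using w p[folded s_def] by (simp add: power2_eq_square)
  finally have "x1 - s*w1 = 0 \<and> x2 - s*w2 = 0 \<and> x3 - s*w3 = 0" by (rule sq3_zero)
  then show ?thesis unfolding s_def[symmetric] by simp
qed

definition PS :: "real \<Rightarrow> real \<Rightarrow> real \<Rightarrow> real \<Rightarrow> real \<Rightarrow> real \<Rightarrow> bool" where
  "PS x1 x2 x3 w1 w2 w3 \<longleftrightarrow> (x1*w1+x2*w2+x3*w3)^2 = x1^2+x2^2+x3^2"

definition PJ :: "real \<Rightarrow> real \<Rightarrow> real \<Rightarrow> real \<Rightarrow> real \<Rightarrow> real \<Rightarrow> real \<Rightarrow> bool" where
  "PJ x0 x1 x2 x3 w1 w2 w3 \<longleftrightarrow> x0 = 0 \<and> x1*w1+x2*w2+x3*w3 = 0"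

lemma real_part1:
  fixes x1 x2 x3 y1 y2 y3 :: real
  shows "(\<exists>w1 w2 w3. w1^2+w2^2+w3^2 = 1 \<and> PS x1 x2 x3 w1 w2 w3 \<and> PS y1 y2 y3 w1 w2 w3)
     \<longleftrightarrow> (x1^2+x2^2+x3^2)*(y1^2+y2^2+y3^2) = (x1*y1+x2*y2+x3*y3)^2"
proof
  assume "\<exists>w1 w2 w3. w1^2+w2^2+w3^2 = 1 \<and> PS x1 x2 x3 w1 w2 w3 \<and> PS y1 y2 y3 w1 w2 w3"
  then obtain w1 w2 w3 where w: "w1^2+w2^2+w3^2 = 1" and px: "PS x1 x2 x3 w1 w2 w3"
    and py: "PS y1 y2 y3 w1 w2 w3" by blast
  define s where "s = x1*w1+x2*w2+x3*w3"
  define t where "t = y1*w1+y2*w2+y3*w3"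
  have xs: "x1 = s*w1" "x2 = s*w2" "x3 = s*w3" using par3[OF w] px unfolding PS_def s_def by blast+
  have ys: "y1 = t*w1" "y2 = t*w2" "y3 = t*w3" using par3[OF w] py unfolding PS_def t_def by blast+
  have "(x1^2+x2^2+x3^2)*(y1^2+y2^2+y3^2) = s^2*t^2*(w1^2+w2^2+w3^2)^2"
    unfolding xs ys by (simp add: power2_eq_square algebra_simps)
  moreover have "(x1*y1+x2*y2+x3*y3)^2 = s^2*t^2*(w1^2+w2^2+w3^2)^2"
    unfolding xs ys by (simp add: power2_eq_square algebra_simps)
  ultimately show "(x1^2+x2^2+x3^2)*(y1^2+y2^2+y3^2) = (x1*y1+x2*y2+x3*y3)^2" by simp
next
  assume h: "(x1^2+x2^2+x3^2)*(y1^2+y2^2+y3^2) = (x1*y1+x2*y2+x3*y3)^2"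
  show "\<exists>w1 w2 w3. w1^2+w2^2+w3^2 = 1 \<and> PS x1 x2 x3 w1 w2 w3 \<and> PS y1 y2 y3 w1 w2 w3"
  proof (cases "x1^2+x2^2+x3^2 = 0")
    case False
    from normalize3[OF False] obtain w1 w2 w3 where w: "w1^2+w2^2+w3^2 = 1"
      and f: "\<And>z1 z2 z3. (z1*w1+z2*w2+z3*w3)^2 = (z1*x1+z2*x2+z3*x3)^2 / (x1^2+x2^2+x3^2)"
      by blast
    have e: "x1*x1+x2*x2+x3*x3 = x1^2+x2^2+x3^2" by (simp add: power2_eq_square)
    have "PS x1 x2 x3 w1 w2 w3" unfolding PS_def f e using False
      by (simp add: power2_eq_square)
    moreover have "(y1*x1+y2*x2+y3*x3)^2 = (x1^2+x2^2+x3^2)*(y1^2+y2^2+y3^2)"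
      using h by (simp add: algebra_simps)
    then have "PS y1 y2 y3 w1 w2 w3" unfolding PS_def f using False
      by simp
    ultimately show ?thesis using w by blast
  next
    case x0: True
    then have xz: "x1 = 0" "x2 = 0" "x3 = 0" using sq3_zero by blast+
    show ?thesis
    proof (cases "y1^2+y2^2+y3^2 = 0")
      case False
      from normalize3[OF False] obtain w1 w2 w3 where w: "w1^2+w2^2+w3^2 = 1"
        and f: "\<And>z1 z2 z3. (z1*w1+z2*w2+z3*w3)^2 = (z1*y1+z2*y2+z3*y3)^2 / (y1^2+y2^2+y3^2)"
        by blast
      have e: "y1*y1+y2*y2+y3*y3 = y1^2+y2^2+y3^2" by (simp add: power2_eq_square)
      have "PS y1 y2 y3 w1 w2 w3" unfolding PS_def f e using False
        by (simp add: power2_eq_square)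
      moreover have "PS x1 x2 x3 w1 w2 w3" unfolding PS_def using xz by simp
      ultimately show ?thesis using w by blast
    next
      case True
      then have "y1 = 0" "y2 = 0" "y3 = 0" using sq3_zero by blast+
      then show ?thesis using xz by (intro exI[of _ 1] exI[of _ 0]) (simp add: PS_def)
    qed
  qed
qed

lemma normalize_PS:
  assumes "v1^2+v2^2+v3^2 \<noteq> 0"
  shows "\<exists>w1 w2 w3. w1^2+w2^2+w3^2 = 1 \<and> PS v1 v2 v3 w1 w2 w3 \<and>
     (\<forall>z1 z2 z3. z1*w1+z2*w2+z3*w3 = 0 \<longleftrightarrow> z1* v1+z2* v2+z3* v3 = 0)"
proof -
  from normalize3[OF assms] obtain w1 w2 w3 where w: "w1^2+w2^2+w3^2 = 1"
    and f: "\<And>z1 z2 z3. (z1*w1+z2*w2+z3*w3)^2 = (z1* v1+z2* v2+z3* v3)^2 / (v1^2+v2^2+v3^2)"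
    and g: "\<And>z1 z2 z3. z1*w1+z2*w2+z3*w3 = 0 \<longleftrightarrow> z1* v1+z2* v2+z3* v3 = 0"
    by blast
  have e: "v1* v1+v2* v2+v3* v3 = v1^2+v2^2+v3^2" by (simp add: power2_eq_square)
  have "PS v1 v2 v3 w1 w2 w3" unfolding PS_def f e using assms
    by (simp add: power2_eq_square)
  then show ?thesis using w g by blast
qed

lemma real_part2:
  fixes x0 x1 x2 x3 y0 y1 y2 y3 :: real
  shows "((\<exists>w1 w2 w3. w1^2+w2^2+w3^2 = 1 \<and> (PS x1 x2 x3 w1 w2 w3 \<or> PJ x0 x1 x2 x3 w1 w2 w3)
            \<and> (PS y1 y2 y3 w1 w2 w3 \<or> PJ y0 y1 y2 y3 w1 w2 w3))
       \<and> \<not> (\<exists>w1 w2 w3. w1^2+w2^2+w3^2 = 1 \<and> PS x1 x2 x3 w1 w2 w3 \<and> PS y1 y2 y3 w1 w2 w3))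
     \<longleftrightarrow> ((x1^2+x2^2+x3^2)*(y1^2+y2^2+y3^2) \<noteq> (x1*y1+x2*y2+x3*y3)^2 \<and>
         ((x0 = 0 \<and> y0 = 0) \<or> (x0 = 0 \<and> x1*y1+x2*y2+x3*y3 = 0) \<or> (y0 = 0 \<and> x1*y1+x2*y2+x3*y3 = 0)))"
  (is "(?E \<and> \<not> ?S) \<longleftrightarrow> (?N \<and> ?C)")
proof
  assume h: "?E \<and> \<not> ?S"
  then have N: ?N using real_part1 by blast
  from h obtain w1 w2 w3 where w: "w1^2+w2^2+w3^2 = 1"
    and hx: "PS x1 x2 x3 w1 w2 w3 \<or> PJ x0 x1 x2 x3 w1 w2 w3"
    and hy: "PS y1 y2 y3 w1 w2 w3 \<or> PJ y0 y1 y2 y3 w1 w2 w3" by blast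
  have ?C
  proof (cases "PS x1 x2 x3 w1 w2 w3")
    case px: True
    show ?thesis
    proof (cases "PS y1 y2 y3 w1 w2 w3")
      case True then show ?thesis using px w h by blast
    next
      case False
      then have jy: "y0 = 0" "y1*w1+y2*w2+y3*w3 = 0" using hy by (auto simp: PJ_def)
      define s where "s = x1*w1+x2*w2+x3*w3"
      have xs: "x1 = s*w1" "x2 = s*w2" "x3 = s*w3" using par3[OF w] px unfolding PS_def s_def by blast+
      have "x1*y1+x2*y2+x3*y3 = s*(y1*w1+y2*w2+y3*w3)" unfolding xs by (simp add: algebra_simps)
      then show ?thesis using jy by simp
    qed
  next
    case False
    then have jx: "x0 = 0" "x1*w1+x2*w2+x3*w3 = 0" using hx by (auto simp: PJ_def)
    show ?thesis
    proof (cases "PS y1 y2 y3 w1 w2 w3")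
      case py: True
      define t where "t = y1*w1+y2*w2+y3*w3"
      have ys: "y1 = t*w1" "y2 = t*w2" "y3 = t*w3" using par3[OF w] py unfolding PS_def t_def by blast+
      have "x1*y1+x2*y2+x3*y3 = t*(x1*w1+x2*w2+x3*w3)" unfolding ys by (simp add: algebra_simps)
      then show ?thesis using jx by simp
    next
      case False
      then have "y0 = 0" using hy by (auto simp: PJ_def)
      then show ?thesis using jx by simp
    qed
  qed
  then show "?N \<and> ?C" using N by blast
next
  assume h: "?N \<and> ?C"
  then have nS: "\<not> ?S" using real_part1 by blast
  have ?E
  proof -
    consider (a) "x0 = 0" "y0 = 0" | (b) "x0 = 0" "x1*y1+x2*y2+x3*y3 = 0"
      | (c) "y0 = 0" "x1*y1+x2*y2+x3*y3 = 0" using h by blast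
    then show ?thesis
    proof cases
      case a
      define c1 where "c1 = x2*y3 - x3*y2"
      define c2 where "c2 = x3*y1 - x1*y3"
      define c3 where "c3 = x1*y2 - x2*y1"
      have lag: "c1^2+c2^2+c3^2 = (x1^2+x2^2+x3^2)*(y1^2+y2^2+y3^2) - (x1*y1+x2*y2+x3*y3)^2"
        unfolding c1_def c2_def c3_def by (simp add: power2_eq_square algebra_simps)
      have "c1^2+c2^2+c3^2 \<noteq> 0" using h lag by simp
      from normalize_PS[OF this] obtain w1 w2 w3 where w: "w1^2+w2^2+w3^2 = 1"
        and g: "\<And>z1 z2 z3. z1*w1+z2*w2+z3*w3 = 0 \<longleftrightarrow> z1*c1+z2*c2+z3*c3 = 0" by blast
      have "x1*c1+x2*c2+x3*c3 = 0" "y1*c1+y2*c2+y3*c3 = 0"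
        unfolding c1_def c2_def c3_def by (simp_all add: algebra_simps)
      then have "PJ x0 x1 x2 x3 w1 w2 w3" "PJ y0 y1 y2 y3 w1 w2 w3" using a g by (simp_all add: PJ_def)
      then show ?thesis using w by blast
    next
      case b
      have "y1^2+y2^2+y3^2 \<noteq> 0" using h b by auto
      from normalize_PS[OF this] obtain w1 w2 w3 where w: "w1^2+w2^2+w3^2 = 1"
        and p: "PS y1 y2 y3 w1 w2 w3"
        and g: "\<And>z1 z2 z3. z1*w1+z2*w2+z3*w3 = 0 \<longleftrightarrow> z1*y1+z2*y2+z3*y3 = 0" by blast
      have "PJ x0 x1 x2 x3 w1 w2 w3" using b g by (simp add: PJ_def)
      then show ?thesis using w p by blast
    next
      case c
      have "x1^2+x2^2+x3^2 \<noteq> 0" using h c by auto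
      from normalize_PS[OF this] obtain w1 w2 w3 where w: "w1^2+w2^2+w3^2 = 1"
        and p: "PS x1 x2 x3 w1 w2 w3"
        and g: "\<And>z1 z2 z3. z1*w1+z2*w2+z3*w3 = 0 \<longleftrightarrow> z1*x1+z2*x2+z3*x3 = 0" by blast
      have "y1*w1+y2*w2+y3*w3 = 0" using g[of y1 y2 y3] c by (simp add: mult.commute)
      then have "PJ y0 y1 y2 y3 w1 w2 w3" using c by (simp add: PJ_def)
      then show ?thesis using w p by blast
    qed
  qed
  then show "?E \<and> \<not> ?S" using nS by blast
qed



lemma trace_adj: "trace (adj (M::cmat)) = cnj (trace M)"
  by (simp add: trace_def adj_def sum_2)

lemma W_unit:
  assumes g: "g \<in> SU2"
  shows "(co1 (g ** Q 0 1 0 0 ** adj g))^2 + (co2 (g ** Q 0 1 0 0 ** adj g))^2 + (co3 (g ** Q 0 1 0 0 ** adj g))^2 = 1"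
  using SU2_co(2)[OF conj_coords(2)[OF g D_SU2]] conj_coords(3)[OF g D_SU2] by simp

lemma rep_Spin_iff:
  assumes X: "X \<in> SU2" and Y: "Y \<in> SU2"
  shows "rep_is Spin2_std X Y \<longleftrightarrow> (\<exists>w1 w2 w3. w1^2+w2^2+w3^2 = 1 \<and>
     PS (co1 X) (co2 X) (co3 X) w1 w2 w3 \<and> PS (co1 Y) (co2 Y) (co3 Y) w1 w2 w3)"
proof
  assume "rep_is Spin2_std X Y"
  then obtain g where g: "g \<in> SU2" and h: "adj g ** X ** g \<in> Spin2_std" "adj g ** Y ** g \<in> Spin2_std"
    unfolding rep_is_def using rep_image_sub_iff[OF _ grp_Spin] by blast
  let ?W = "g ** Q 0 1 0 0 ** adj g"
  show "\<exists>w1 w2 w3. w1^2+w2^2+w3^2 = 1 \<and>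
     PS (co1 X) (co2 X) (co3 X) w1 w2 w3 \<and> PS (co1 Y) (co2 Y) (co3 Y) w1 w2 w3"
    apply (rule exI[of _ "co1 ?W"], rule exI[of _ "co2 ?W"], rule exI[of _ "co3 ?W"])
    using W_unit[OF g] h Spin_conj_iff[OF g X] Spin_conj_iff[OF g Y] by (simp add: PS_def)
next
  assume "\<exists>w1 w2 w3. w1^2+w2^2+w3^2 = 1 \<and>
     PS (co1 X) (co2 X) (co3 X) w1 w2 w3 \<and> PS (co1 Y) (co2 Y) (co3 Y) w1 w2 w3"
  then obtain w1 w2 w3 where w: "w1^2+w2^2+w3^2 = 1" and p: "PS (co1 X) (co2 X) (co3 X) w1 w2 w3"
    "PS (co1 Y) (co2 Y) (co3 Y) w1 w2 w3" by blast
  obtain g where g: "g \<in> SU2" and gw: "g ** Q 0 1 0 0 ** adj g = Q 0 w1 w2 w3" using exists_g[OF w] by blast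
  have "adj g ** X ** g \<in> Spin2_std" "adj g ** Y ** g \<in> Spin2_std"
    using Spin_conj_iff[OF g X] Spin_conj_iff[OF g Y] p unfolding gw by (simp_all add: co_Q PS_def)
  then show "rep_is Spin2_std X Y" unfolding rep_is_def using rep_image_sub_iff[OF g grp_Spin] g by blast
qed

lemma rep_Pin_iff:
  assumes X: "X \<in> SU2" and Y: "Y \<in> SU2"
  shows "rep_is Pin2_std X Y \<longleftrightarrow> (\<exists>w1 w2 w3. w1^2+w2^2+w3^2 = 1 \<and>
     (PS (co1 X) (co2 X) (co3 X) w1 w2 w3 \<or> PJ (co0 X) (co1 X) (co2 X) (co3 X) w1 w2 w3) \<and>
     (PS (co1 Y) (co2 Y) (co3 Y) w1 w2 w3 \<or> PJ (co0 Y) (co1 Y) (co2 Y) (co3 Y) w1 w2 w3))"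
proof
  assume "rep_is Pin2_std X Y"
  then obtain g where g: "g \<in> SU2" and h: "adj g ** X ** g \<in> Pin2_std" "adj g ** Y ** g \<in> Pin2_std"
    unfolding rep_is_def using rep_image_sub_iff[OF _ grp_Pin] by blast
  let ?W = "g ** Q 0 1 0 0 ** adj g"
  show "\<exists>w1 w2 w3. w1^2+w2^2+w3^2 = 1 \<and>
     (PS (co1 X) (co2 X) (co3 X) w1 w2 w3 \<or> PJ (co0 X) (co1 X) (co2 X) (co3 X) w1 w2 w3) \<and>
     (PS (co1 Y) (co2 Y) (co3 Y) w1 w2 w3 \<or> PJ (co0 Y) (co1 Y) (co2 Y) (co3 Y) w1 w2 w3)"
    apply (rule exI[of _ "co1 ?W"], rule exI[of _ "co2 ?W"], rule exI[of _ "co3 ?W"])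
    using W_unit[OF g] h Spin_conj_iff[OF g X] Spin_conj_iff[OF g Y] J_conj_iff[OF g X] J_conj_iff[OF g Y]
    by (simp add: PS_def PJ_def Pin_Jset)
next
  assume "\<exists>w1 w2 w3. w1^2+w2^2+w3^2 = 1 \<and>
     (PS (co1 X) (co2 X) (co3 X) w1 w2 w3 \<or> PJ (co0 X) (co1 X) (co2 X) (co3 X) w1 w2 w3) \<and>
     (PS (co1 Y) (co2 Y) (co3 Y) w1 w2 w3 \<or> PJ (co0 Y) (co1 Y) (co2 Y) (co3 Y) w1 w2 w3)"
  then obtain w1 w2 w3 where w: "w1^2+w2^2+w3^2 = 1" and
    p: "PS (co1 X) (co2 X) (co3 X) w1 w2 w3 \<or> PJ (co0 X) (co1 X) (co2 X) (co3 X) w1 w2 w3"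
     "PS (co1 Y) (co2 Y) (co3 Y) w1 w2 w3 \<or> PJ (co0 Y) (co1 Y) (co2 Y) (co3 Y) w1 w2 w3" by blast
  obtain g where g: "g \<in> SU2" and gw: "g ** Q 0 1 0 0 ** adj g = Q 0 w1 w2 w3" using exists_g[OF w] by blast
  have "adj g ** X ** g \<in> Pin2_std" "adj g ** Y ** g \<in> Pin2_std"
    using Spin_conj_iff[OF g X] Spin_conj_iff[OF g Y] J_conj_iff[OF g X] J_conj_iff[OF g Y] p
    unfolding gw by (auto simp: co_Q PS_def PJ_def Pin_Jset)
  then show "rep_is Pin2_std X Y" unfolding rep_is_def using rep_image_sub_iff[OF g grp_Pin] g by blast
qed

theorem proposition4p1:
  fixes X Y :: cmat
  assumes "X \<in> SU2" and "Y \<in> SU2"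
  defines "a \<equiv> trace X" and "b \<equiv> trace Y" and "c \<equiv> trace (adj (X ** Y))"
  shows "(rep_is Spin2_std X Y \<longleftrightarrow> a\<^sup>2 + b\<^sup>2 + c\<^sup>2 - a * b * c - 4 = 0)
     \<and> ((rep_is Pin2_std X Y \<and> \<not> rep_is Spin2_std X Y) \<longleftrightarrow>
          (a\<^sup>2 + b\<^sup>2 + c\<^sup>2 - a * b * c - 4 \<noteq> 0 \<and>
           ((trace X = 0 \<and> trace Y = 0) \<or> (trace X = 0 \<and> trace (X ** Y) = 0)
            \<or> (trace Y = 0 \<and> trace (X ** Y) = 0))))"
proof -
  note X = assms(1) and Y = assms(2)
  define x0 x1 x2 x3 where "x0 = co0 X" "x1 = co1 X" "x2 = co2 X" "x3 = co3 X"
  define y0 y1 y2 y3 where "y0 = co0 Y" "y1 = co1 Y" "y2 = co2 Y" "y3 = co3 Y"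
  define d where "d = x1*y1+x2*y2+x3*y3"
  have sx: "x0^2+x1^2+x2^2+x3^2 = 1" using SU2_co(2)[OF X] x0_x1_x2_x3_def by simp
  have sy: "y0^2+y1^2+y2^2+y3^2 = 1" using SU2_co(2)[OF Y] y0_y1_y2_y3_def by simp
  have tX: "trace X = of_real (2*x0)" using trace_SU2[OF X] x0_x1_x2_x3_def by simp
  have tY: "trace Y = of_real (2*y0)" using trace_SU2[OF Y] y0_y1_y2_y3_def by simp
  have tXY: "trace (X ** Y) = of_real (2*(x0*y0 - d))"
    using trace_SU2_SU2[OF X Y] x0_x1_x2_x3_def y0_y1_y2_y3_def d_def by (simp add: algebra_simps)
  have tc: "c = of_real (2*(x0*y0 - d))" unfolding c_def trace_adj tXY by simp
  define K where "K = (2*x0)^2 + (2*y0)^2 + (2*(x0*y0-d))^2 - (2*x0)*(2*y0)*(2*(x0*y0-d)) - 4"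
  have kap: "a\<^sup>2 + b\<^sup>2 + c\<^sup>2 - a * b * c - 4 = of_real K"
    unfolding a_def b_def tc tX tY K_def by simp
  have "K = -4 * ((x1^2+x2^2+x3^2)*(y1^2+y2^2+y3^2) - d^2)"
  proof -
    have e1: "x1^2+x2^2+x3^2 = 1 - x0^2" using sx by simp
    have e2: "y1^2+y2^2+y3^2 = 1 - y0^2" using sy by simp
    show ?thesis unfolding e1 e2 K_def by (simp add: power2_eq_square algebra_simps)
  qed
  then have "K = 0 \<longleftrightarrow> (x1^2+x2^2+x3^2)*(y1^2+y2^2+y3^2) = d^2" by auto
  then have kz: "a\<^sup>2 + b\<^sup>2 + c\<^sup>2 - a * b * c - 4 = 0 \<longleftrightarrow> (x1^2+x2^2+x3^2)*(y1^2+y2^2+y3^2) = d^2"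
    unfolding kap of_real_eq_0_iff .
  have S: "rep_is Spin2_std X Y \<longleftrightarrow> (x1^2+x2^2+x3^2)*(y1^2+y2^2+y3^2) = d^2"
    unfolding rep_Spin_iff[OF X Y] real_part1 d_def x0_x1_x2_x3_def y0_y1_y2_y3_def ..
  have P: "(rep_is Pin2_std X Y \<and> \<not> rep_is Spin2_std X Y) \<longleftrightarrow>
     ((x1^2+x2^2+x3^2)*(y1^2+y2^2+y3^2) \<noteq> d^2 \<and>
         ((x0 = 0 \<and> y0 = 0) \<or> (x0 = 0 \<and> d = 0) \<or> (y0 = 0 \<and> d = 0)))"
    unfolding rep_Spin_iff[OF X Y] rep_Pin_iff[OF X Y] real_part2 d_def x0_x1_x2_x3_def y0_y1_y2_y3_def ..
  have T: "((trace X = 0 \<and> trace Y = 0) \<or> (trace X = 0 \<and> trace (X ** Y) = 0)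
            \<or> (trace Y = 0 \<and> trace (X ** Y) = 0)) \<longleftrightarrow>
          ((x0 = 0 \<and> y0 = 0) \<or> (x0 = 0 \<and> d = 0) \<or> (y0 = 0 \<and> d = 0))"
    unfolding tX tY tXY by auto
  show ?thesis using S P T kz by blast
qed

end
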